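(* Let $\langle S,L,\tau,\ell\rangle$ be a labelled Markov chain. Robust bisimilarity $\simeq$ is a robust bisimulation.
   Context: Labelled Markov chain $\langle S,L,\tau,\ell\rangle$: finite $S$, finite $L$, $\tau:S\to\mathcal{D}(S)$, $\ell:S\to L$, $|\ell(S)|\ge 2$. $\Omega(\mu,\nu)$ = couplings (distributions on $S\times S$ with marginals $\mu,\nu$). A (probabilistic) bisimulation is an equivalence relation $R\subseteq S\times S$ such that for all $(s,t)\in R$, $\ell(s)=\ell(t)$ and some $\omega\in\Omega(\tau(s),\tau(t))$ has $\mathrm{support}(\omega)\subseteq R$. $S^2_\Delta=\{(s,s)\}$, $S^2_1=\{(s,t)\mid\ell(s)\ne\ell(t)\}$. A policy is $P:S\times S\to\mathcal{D}(S\times S)$ with $P(s,t)\in\Omega(\tau(s),\tau(t))$ for $(s,t)\notin S^2_1$ and $P(s,t)$ the point mass at $(s,t)$ for $(s,t)\in S^2_1$; $\mathcal{P}$ is the set of policies; $P$ induces the Markov chain $\langle S\times S,P\rangle$. Robust bisimilarity: $s\simeq t$ iff some $P\in\mathcal{P}$ makes $(s,t)$ reach $S^2_\Delta$ with probability $1$ in $\langle S\times S,P\rangle$. For a policy $P$, a set $R\subseteq S\times S$ supports a path $(u_1,v_1)\dots(u_n,v_n)$ of $\langle S\times S,P\rangle$ if $(u_i,v_i)\in R$ and $\mathrm{support}(P(u_i,v_i))\subseteq R$ for all $1\le i\le n$. A robust bisimulation is a bisimulation $R$ such that for every $(s,t)\in R$ there is $P\in\mathcal{P}$ such that $R$ supports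 a path from $(s,t)$ to (a pair in) $S^2_\Delta$ in $\langle S\times S,P\rangle$. *)

theory Defs
  imports "HOL-Probability.Probability_Mass_Function"
begin

text \<open>Labelled Markov chain: state space = finite type 's, labels = finite type 'l,
  transition function tau :: 's => 's pmf, labelling lab :: 's => 'l.\<close>

definition couplings :: "'s pmf \<Rightarrow> 's pmf \<Rightarrow> ('s \<times> 's) pmf set" where
  "couplings \<mu> \<nu> = {\<omega>. map_pmf fst \<omega> = \<mu> \<and> map_pmf snd \<omega> = \<nu>}"

definition bisimulation :: "('s \<Rightarrow> 's pmf) \<Rightarrow> ('s \<Rightarrow> 'l) \<Rightarrow> ('s \<times> 's) set \<Rightarrow> bool" where
  "bisimulation \<tau> lab R \<longleftrightarrow> equiv UNIV R \<and>
     (\<forall>(s,t)\<in>R. lab s = lab t \<and> (\<exists>\<omega>\<in>couplings (\<tau> s) (\<tau> t). set_pmf \<omega> \<subseteq> R))"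

definition diag_pairs :: "('s \<times> 's) set" where
  "diag_pairs = {(s,s) | s. True}"

definition diff_label_pairs :: "('s \<Rightarrow> 'l) \<Rightarrow> ('s \<times> 's) set" where
  "diff_label_pairs lab = {(s,t). lab s \<noteq> lab t}"

definition policy :: "('s \<Rightarrow> 's pmf) \<Rightarrow> ('s \<Rightarrow> 'l) \<Rightarrow> ('s \<times> 's \<Rightarrow> ('s \<times> 's) pmf) \<Rightarrow> bool" where
  "policy \<tau> lab P \<longleftrightarrow>
     (\<forall>s t. ((s,t) \<notin> diff_label_pairs lab \<longrightarrow> P (s,t) \<in> couplings (\<tau> s) (\<tau> t)) \<and>
            ((s,t) \<in> diff_label_pairs lab \<longrightarrow> P (s,t) = return_pmf (s,t)))"

text \<open>Distribution of the first n steps (paths of length n+1) of the Markov chain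
  with transition function P started in x.\<close>
primrec path_pmf :: "('a \<Rightarrow> 'a pmf) \<Rightarrow> 'a \<Rightarrow> nat \<Rightarrow> 'a list pmf" where
  "path_pmf P x 0 = return_pmf [x]"
| "path_pmf P x (Suc n) = bind_pmf (P x) (\<lambda>y. map_pmf (\<lambda>p. x # p) (path_pmf P y n))"

definition reach_prob :: "('a \<Rightarrow> 'a pmf) \<Rightarrow> 'a set \<Rightarrow> 'a \<Rightarrow> real" where
  "reach_prob P T x = (SUP n. measure_pmf.prob (path_pmf P x n) {p. \<exists>z\<in>set p. z \<in> T})"

definition robust_bisimilar :: "('s \<Rightarrow> 's pmf) \<Rightarrow> ('s \<Rightarrow> 'l) \<Rightarrow> 's \<Rightarrow> 's \<Rightarrow> bool" where
  "robust_bisimilar \<tau> lab s t \<longleftrightarrow>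
     (\<exists>P. policy \<tau> lab P \<and> reach_prob P diag_pairs (s,t) = 1)"

definition is_path :: "('a \<Rightarrow> 'a pmf) \<Rightarrow> 'a list \<Rightarrow> bool" where
  "is_path P xs \<longleftrightarrow> xs \<noteq> [] \<and> (\<forall>i. Suc i < length xs \<longrightarrow> xs ! Suc i \<in> set_pmf (P (xs ! i)))"

definition supports :: "('a \<Rightarrow> 'a pmf) \<Rightarrow> 'a set \<Rightarrow> 'a list \<Rightarrow> bool" where
  "supports P R xs \<longleftrightarrow> (\<forall>x\<in>set xs. x \<in> R \<and> set_pmf (P x) \<subseteq> R)"

definition robust_bisimulation :: "('s \<Rightarrow> 's pmf) \<Rightarrow> ('s \<Rightarrow> 'l) \<Rightarrow> ('s \<times> 's) set \<Rightarrow> bool" where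
  "robust_bisimulation \<tau> lab R \<longleftrightarrow> bisimulation \<tau> lab R \<and>
     (\<forall>(s,t)\<in>R. \<exists>P. policy \<tau> lab P \<and>
        (\<exists>xs. is_path P xs \<and> hd xs = (s,t) \<and> last xs \<in> diag_pairs \<and> supports P R xs))"

end

theory Submission
  imports Defs
begin


lemma prob_bind_pmf: "measure_pmf.prob (bind_pmf M f) A = (\<integral>x. measure_pmf.prob (f x) A \<partial>measure_pmf M)"
  unfolding measure_pmf_bind
  by (subst measure_pmf.measure_bind[where N="count_space UNIV"]) (auto simp: measure_subprob)

primrec hit :: "('a::finite \<Rightarrow> 'a pmf) \<Rightarrow> 'a set \<Rightarrow> nat \<Rightarrow> 'a \<Rightarrow> real" where
  "hit Q T 0 x = (if x \<in> T then 1 else 0)"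
| "hit Q T (Suc n) x = (if x \<in> T then 1 else (\<Sum>y\<in>UNIV. pmf (Q x) y * hit Q T n y))"

lemma hit_T: "x \<in> T \<Longrightarrow> hit Q T n x = 1" by (cases n) auto

lemma sum_pmf_UNIV: "(\<Sum>y\<in>(UNIV::'a::finite set). pmf M y) = 1"
  by (rule sum_pmf_eq_1) auto

lemma hit_bounds: "0 \<le> hit Q T n x \<and> hit Q T n x \<le> 1"
proof (induction n arbitrary: x)
  case 0 then show ?case by auto
next
  case (Suc n)
  have "(\<Sum>y\<in>UNIV. pmf (Q x) y * hit Q T n y) \<le> (\<Sum>y\<in>UNIV. pmf (Q x) y)"
    by (intro sum_mono) (simp add: Suc mult_left_le)
  then show ?case using Suc by (auto intro!: sum_nonneg simp: sum_pmf_UNIV)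
qed

lemma path_hit: "measure_pmf.prob (path_pmf Q x n) {p. \<exists>z\<in>set p. z \<in> T} = hit Q T n x"
proof (induction n arbitrary: x)
  case 0 then show ?case by (simp add: measure_return_pmf)
next
  case (Suc n)
  let ?A = "{p. \<exists>z\<in>set p. z \<in> T}"
  have "measure_pmf.prob (path_pmf Q x (Suc n)) ?A =
     (\<integral>y. measure_pmf.prob (path_pmf Q y n) ((\<lambda>p. x # p) -` ?A) \<partial>measure_pmf (Q x))"
    by (simp add: prob_bind_pmf)
  also have "\<dots> = hit Q T (Suc n) x"
  proof (cases "x \<in> T")
    case True
    then have "(\<lambda>p. x # p) -` ?A = UNIV" by auto
    then show ?thesis using True by simp
  next
    case False
    then have "(\<lambda>p. x # p) -` ?A = ?A" by auto
    then show ?thesis using False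
      by (simp add: Suc integral_measure_pmf_real[where A=UNIV] mult.commute)
  qed
  finally show ?case .
qed

lemma reach_eq: fixes Q :: "'a::finite \<Rightarrow> 'a pmf" shows "reach_prob Q T x = (SUP n. hit Q T n x)"
  unfolding reach_prob_def path_hit ..

lemma hit_le_reach: fixes Q :: "'a::finite \<Rightarrow> 'a pmf" shows "hit Q T n x \<le> reach_prob Q T x"
  unfolding reach_eq by (rule cSUP_upper) (auto intro: bdd_aboveI[where M=1] simp: hit_bounds)

lemma reach_le1: fixes Q :: "'a::finite \<Rightarrow> 'a pmf" shows "reach_prob Q T x \<le> 1"
  unfolding reach_eq by (rule cSUP_least) (auto simp: hit_bounds)

lemma reach_succ:
  fixes Q :: "'a::finite \<Rightarrow> 'a pmf"
  assumes r: "reach_prob Q T x = 1" and x: "x \<notin> T" and y: "y \<in> set_pmf (Q x)"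
  shows "reach_prob Q T y = 1"
proof (rule ccontr)
  assume ne: "reach_prob Q T y \<noteq> 1"
  define L where "L = reach_prob Q T y"
  have L1: "L < 1" using ne reach_le1[of Q T y] unfolding L_def by auto
  have L0: "0 \<le> L" using hit_le_reach[of Q T 0 y] hit_bounds[of Q T 0 y] unfolding L_def by linarith
  define p where "p = pmf (Q x) y"
  have p0: "p > 0" using y by (simp add: p_def pmf_positive)
  have p1: "p \<le> 1" by (simp add: p_def pmf_le_1)
  have bound: "hit Q T n x \<le> 1 - p * (1 - L)" for n
  proof (cases n)
    case 0
    have "p * (1 - L) \<le> 1 * 1" using p1 L0 L1 p0 by (intro mult_mono) auto
    then show ?thesis using 0 x by simp
  next
    case (Suc m)
    have hy: "hit Q T m y \<le> L" unfolding L_def by (rule hit_le_reach)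
    have "(\<Sum>z\<in>UNIV. pmf (Q x) z * (1 - hit Q T m z)) \<ge> pmf (Q x) y * (1 - hit Q T m y)"
      by (rule member_le_sum) (auto simp: hit_bounds)
    moreover have "(\<Sum>z\<in>UNIV. pmf (Q x) z * (1 - hit Q T m z)) = 1 - (\<Sum>z\<in>UNIV. pmf (Q x) z * hit Q T m z)"
      by (simp add: right_diff_distrib sum_subtractf sum_pmf_UNIV)
    moreover have "p * (1 - L) \<le> p * (1 - hit Q T m y)" using hy p0 by (intro mult_left_mono) auto
    ultimately show ?thesis using Suc x by (simp add: p_def)
  qed
  have "reach_prob Q T x \<le> 1 - p * (1 - L)"
    unfolding reach_eq by (rule cSUP_least) (auto simp: bound)
  moreover have "p * (1 - L) > 0" using p0 L1 by simp
  ultimately show False using r by simp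
qed

fun canreach :: "('a \<Rightarrow> 'a pmf) \<Rightarrow> 'a set \<Rightarrow> nat \<Rightarrow> 'a \<Rightarrow> bool" where
  "canreach Q T 0 x = (x \<in> T)"
| "canreach Q T (Suc n) x = (x \<in> T \<or> (\<exists>y\<in>set_pmf (Q x). canreach Q T n y))"

lemma canreach_mono: "canreach Q T m x \<Longrightarrow> m \<le> n \<Longrightarrow> canreach Q T n x"
proof (induction m arbitrary: n x)
  case 0 then show ?case by (cases n) auto
next
  case (Suc m)
  then obtain n' where n: "n = Suc n'" by (cases n) auto
  then show ?case using Suc by auto
qed

lemma canreach_hit_pos: fixes Q :: "'a::finite \<Rightarrow> 'a pmf" shows "canreach Q T m x \<Longrightarrow> m \<le> n \<Longrightarrow> hit Q T n x > 0"
proof (induction m arbitrary: n x)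
  case 0 then show ?case by (simp add: hit_T)
next
  case (Suc m)
  show ?case
  proof (cases "x \<in> T")
    case True then show ?thesis by (simp add: hit_T)
  next
    case False
    then obtain y where y: "y \<in> set_pmf (Q x)" "canreach Q T m y" using Suc by auto
    obtain n' where n: "n = Suc n'" using Suc by (cases n) auto
    have "hit Q T n' y > 0" using Suc y n by auto
    then have "pmf (Q x) y * hit Q T n' y > 0" using y by (simp add: pmf_positive)
    also have "\<dots> \<le> (\<Sum>z\<in>UNIV. pmf (Q x) z * hit Q T n' z)"
      by (rule member_le_sum) (auto simp: hit_bounds)
    finally show ?thesis using False n by simp
  qed
qed

lemma hit_pos_canreach: fixes Q :: "'a::finite \<Rightarrow> 'a pmf" shows "hit Q T n x > 0 \<Longrightarrow> canreach Q T n x"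
proof (induction n arbitrary: x)
  case 0 then show ?case by (auto split: if_splits)
next
  case (Suc n)
  show ?case
  proof (cases "x \<in> T")
    case True then show ?thesis by simp
  next
    case False
    then have "(\<Sum>z\<in>UNIV. pmf (Q x) z * hit Q T n z) > 0" using Suc by simp
    then obtain z where "pmf (Q x) z * hit Q T n z \<noteq> 0"
      by (metis (no_types, lifting) less_irrefl sum.neutral)
    then have "z \<in> set_pmf (Q x)" "hit Q T n z > 0"
      using hit_bounds[of Q T n z] by (auto simp: set_pmf_eq)
    then show ?thesis using Suc False by auto
  qed
qed


lemma one_minus_hit_Suc:
  fixes Q :: "'a::finite \<Rightarrow> 'a pmf"
  assumes "x \<notin> T"
  shows "1 - hit Q T (Suc n) x = (\<Sum>y\<in>UNIV. pmf (Q x) y * (1 - hit Q T n y))"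
  using assms by (simp add: right_diff_distrib sum_subtractf sum_pmf_UNIV)

lemma closed_reach:
  fixes Q :: "'a::finite \<Rightarrow> 'a pmf"
  assumes closed: "\<And>x. x \<in> W \<Longrightarrow> x \<notin> T \<Longrightarrow> set_pmf (Q x) \<subseteq> W"
  and cr: "\<And>x. x \<in> W \<Longrightarrow> \<exists>n. canreach Q T n x"
  and xW: "x \<in> W"
  shows "reach_prob Q T x = 1"
proof -
  have finW: "finite W" by simp
  define nx where "nx x = (SOME n. canreach Q T n x)" for x
  define N where "N = Max (nx ` W)"
  have crN: "canreach Q T N y" if "y \<in> W" for y
  proof -
    have "canreach Q T (nx y) y" unfolding nx_def using cr[OF that] by (rule someI_ex)
    moreover have "nx y \<le> N" unfolding N_def using that by (intro Max_ge) auto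
    ultimately show ?thesis by (rule canreach_mono)
  qed
  define M where "M = Max (insert 0 ((\<lambda>y. 1 - hit Q T N y) ` W))"
  have M0: "0 \<le> M" unfolding M_def by (intro Max_ge) auto
  have M1: "M < 1" unfolding M_def
    using canreach_hit_pos[OF crN] by (subst Max_less_iff) auto
  have Mb: "1 - hit Q T N y \<le> M" if "y \<in> W" for y
    unfolding M_def using that by (intro Max_ge) auto
  have step: "1 - hit Q T (m + N) y \<le> (1 - hit Q T m y) * M" if "y \<in> W" for m y
    using that
  proof (induction m arbitrary: y)
    case 0
    show ?case
    proof (cases "y \<in> T")
      case True then show ?thesis by (simp add: hit_T)
    next
      case False then show ?thesis using Mb[OF 0] by simp
    qed
  next
    case (Suc m)
    show ?case
    proof (cases "y \<in> T")
      case True then show ?thesis by (simp add: hit_T)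
    next
      case False
      have "1 - hit Q T (Suc m + N) y = (\<Sum>z\<in>UNIV. pmf (Q y) z * (1 - hit Q T (m + N) z))"
        using one_minus_hit_Suc[OF False] by simp
      also have "\<dots> \<le> (\<Sum>z\<in>UNIV. pmf (Q y) z * ((1 - hit Q T m z) * M))"
      proof (rule sum_mono)
        fix z
        show "pmf (Q y) z * (1 - hit Q T (m + N) z) \<le> pmf (Q y) z * ((1 - hit Q T m z) * M)"
        proof (cases "z \<in> set_pmf (Q y)")
          case True
          then have "z \<in> W" using closed[OF Suc.prems False] by auto
          then show ?thesis using Suc.IH by (intro mult_left_mono) auto
        next
          case False then show ?thesis by (simp add: set_pmf_eq)
        qed
      qed
      also have "\<dots> = (1 - hit Q T (Suc m) y) * M"
        using one_minus_hit_Suc[OF False, of Q m]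
        by (simp add: sum_distrib_right mult.assoc)
      finally show ?thesis .
    qed
  qed
  have pow: "1 - hit Q T (k * N) y \<le> M ^ k" if "y \<in> W" for k y
  proof (induction k)
    case 0 then show ?case using hit_bounds[of Q T 0 y] by simp
  next
    case (Suc k)
    have "1 - hit Q T (Suc k * N) y = 1 - hit Q T (k * N + N) y" by (simp add: add.commute)
    also have "\<dots> \<le> (1 - hit Q T (k * N) y) * M" by (rule step[OF that])
    also have "\<dots> \<le> M ^ k * M" using Suc M0 by (intro mult_right_mono) auto
    finally show ?case by (simp add: mult.commute)
  qed
  show ?thesis
  proof (rule ccontr)
    assume "reach_prob Q T x \<noteq> 1"
    then have "reach_prob Q T x < 1" using reach_le1[of Q T x] by auto
    then obtain k where k: "M ^ k < 1 - reach_prob Q T x"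
      using real_arch_pow_inv[OF _ M1, of "1 - reach_prob Q T x"] by auto
    have "hit Q T (k * N) x \<le> reach_prob Q T x" by (rule hit_le_reach)
    then show False using pow[OF xW, of k] k by simp
  qed
qed



lemma glue:
  assumes c1: "\<omega>1 \<in> couplings \<mu> \<nu>" and c2: "\<omega>2 \<in> couplings \<nu> \<rho>"
  shows "\<exists>\<omega>\<in>couplings \<mu> \<rho>. set_pmf \<omega> = set_pmf \<omega>1 O set_pmf \<omega>2"
proof -
  have p: "\<mu> = map_pmf fst \<omega>1" and q: "\<nu> = map_pmf snd \<omega>1"
    and q': "\<nu> = map_pmf fst \<omega>2" and r: "\<rho> = map_pmf snd \<omega>2"
    using c1 c2 by (auto simp: couplings_def)
  define pr where "pr =
        bind_pmf \<omega>1 (\<lambda>xy. bind_pmf (cond_pmf \<omega>2 {yz. fst yz = snd xy})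
          (\<lambda>yz. return_pmf (fst xy, snd yz)))"
  have wd: "\<And>y. y \<in> set_pmf \<nu> \<Longrightarrow> set_pmf \<omega>2 \<inter> {yz. fst yz = y} \<noteq> {}"
    by (force simp: q')
  have wd1: "\<And>xy. xy \<in> set_pmf \<omega>1 \<Longrightarrow> set_pmf \<omega>2 \<inter> {yz. fst yz = snd xy} \<noteq> {}"
    using wd by (force simp: q)
  have "set_pmf pr = set_pmf \<omega>1 O set_pmf \<omega>2"
  proof
    show "set_pmf pr \<subseteq> set_pmf \<omega>1 O set_pmf \<omega>2"
      using wd1 by (auto simp: pr_def set_cond_pmf[OF wd1])
  next
    show "set_pmf \<omega>1 O set_pmf \<omega>2 \<subseteq> set_pmf pr"
    proof
      fix xz assume "xz \<in> set_pmf \<omega>1 O set_pmf \<omega>2"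
      then obtain x y z where xz: "xz = (x, z)" and xy: "(x, y) \<in> set_pmf \<omega>1" and yz: "(y, z) \<in> set_pmf \<omega>2"
        by auto
      have "(y, z) \<in> set_pmf (cond_pmf \<omega>2 {yz. fst yz = snd (x, y)})"
        using wd1[OF xy] yz by (subst set_cond_pmf) auto
      then show "xz \<in> set_pmf pr" unfolding pr_def xz using xy by force
    qed
  qed
  moreover have "map_pmf fst pr = \<mu>"
    using wd1 by (simp add: pr_def map_bind_pmf split_beta map_pmf_def[symmetric] p map_pmf_comp)
  moreover have "map_pmf snd pr = \<rho>"
  proof -
    have "map_pmf snd pr = map_pmf snd (bind_pmf \<nu> (\<lambda>y. cond_pmf \<omega>2 {yz. fst yz = y}))"
      by (simp add: pr_def q split_beta bind_map_pmf map_pmf_def[symmetric] map_bind_pmf map_pmf_comp)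
    then show "map_pmf snd pr = \<rho>"
      unfolding r q' bind_map_pmf by (subst (asm) bind_cond_pmf_cancel) (auto simp: eq_commute)
  qed
  ultimately show ?thesis by (auto simp: couplings_def)
qed



fun attrn :: "('s \<Rightarrow> 's pmf) \<Rightarrow> ('s \<Rightarrow> 'l) \<Rightarrow> ('s \<times> 's) set \<Rightarrow> nat \<Rightarrow> 's \<times> 's \<Rightarrow> bool" where
  "attrn \<tau> lab X 0 x = (x \<in> diag_pairs)"
| "attrn \<tau> lab X (Suc n) x = (x \<in> diag_pairs \<or> (x \<in> X \<and> lab (fst x) = lab (snd x) \<and>
     (\<exists>\<omega>\<in>couplings (\<tau> (fst x)) (\<tau> (snd x)). set_pmf \<omega> \<subseteq> X \<and> (\<exists>y\<in>set_pmf \<omega>. attrn \<tau> lab X n y))))"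

definition dcoup :: "('s \<Rightarrow> 's pmf) \<Rightarrow> 's \<Rightarrow> ('s \<times> 's) pmf" where
  "dcoup \<tau> s = map_pmf (\<lambda>a. (a, a)) (\<tau> s)"

lemma dcoup: "dcoup \<tau> s \<in> couplings (\<tau> s) (\<tau> s)" "set_pmf (dcoup \<tau> s) \<subseteq> diag_pairs"
  by (auto simp: dcoup_def couplings_def pmf.map_comp o_def diag_pairs_def)

lemma in_diag: "x \<in> diag_pairs \<longleftrightarrow> fst x = snd x"
  by (cases x) (auto simp: diag_pairs_def)

definition P0 :: "('s \<Rightarrow> 's pmf) \<Rightarrow> ('s \<Rightarrow> 'l) \<Rightarrow> 's \<times> 's \<Rightarrow> ('s \<times> 's) pmf" where
  "P0 \<tau> lab x = (if lab (fst x) \<noteq> lab (snd x) then return_pmf x else pair_pmf (\<tau> (fst x)) (\<tau> (snd x)))"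

lemma P0: "policy \<tau> lab (P0 \<tau> lab)"
  by (auto simp: policy_def P0_def diff_label_pairs_def couplings_def map_fst_pair_pmf map_snd_pair_pmf)

lemma policy_coupling: "policy \<tau> lab P \<Longrightarrow> lab s = lab t \<Longrightarrow> P (s, t) \<in> couplings (\<tau> s) (\<tau> t)"
  by (auto simp: policy_def diff_label_pairs_def)

lemma policy_diff: "policy \<tau> lab P \<Longrightarrow> lab s \<noteq> lab t \<Longrightarrow> P (s, t) = return_pmf (s, t)"
  by (auto simp: policy_def diff_label_pairs_def)

lemma attrn_diag_or: "attrn \<tau> lab X n x \<Longrightarrow> x \<notin> diag_pairs \<Longrightarrow> x \<in> X \<and> lab (fst x) = lab (snd x)"
  by (cases n) auto

lemma attr_policy:
  fixes \<tau> :: "'s::finite \<Rightarrow> 's pmf" and lab :: "'s \<Rightarrow> 'l"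
  assumes DX: "diag_pairs \<subseteq> X" and att: "\<And>x. x \<in> X \<Longrightarrow> \<exists>n. attrn \<tau> lab X n x"
  shows "\<exists>Q. policy \<tau> lab Q \<and> (\<forall>x\<in>X. set_pmf (Q x) \<subseteq> X \<and> (\<exists>n. canreach Q diag_pairs n x)
            \<and> reach_prob Q diag_pairs x = 1)"
proof -
  define rk where "rk x = (LEAST n. attrn \<tau> lab X n x)" for x
  define good where "good x \<omega> \<longleftrightarrow> \<omega> \<in> couplings (\<tau> (fst x)) (\<tau> (snd x)) \<and> set_pmf \<omega> \<subseteq> X
      \<and> (\<exists>y\<in>set_pmf \<omega>. attrn \<tau> lab X (rk x - 1) y)" for x \<omega>
  define Q where "Q x = (if x \<in> diag_pairs then dcoup \<tau> (fst x) else if x \<in> X then (SOME \<omega>. good x \<omega>)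
     else P0 \<tau> lab x)" for x
  have K: "lab (fst x) = lab (snd x) \<and> good x (Q x) \<and> rk x = Suc (rk x - 1)"
    if x: "x \<in> X" "x \<notin> diag_pairs" for x
  proof -
    obtain n where n: "attrn \<tau> lab X n x" using att[OF x(1)] by auto
    have a: "attrn \<tau> lab X (rk x) x" unfolding rk_def using n by (rule LeastI)
    then obtain m where m: "rk x = Suc m" using x by (cases "rk x") auto
    then have ex: "\<exists>\<omega>. good x \<omega>" using a x unfolding good_def by auto
    have "good x (Q x)" using x someI_ex[OF ex] by (simp add: Q_def)
    then show ?thesis using a m x by auto
  qed
  have pol: "policy \<tau> lab Q"
    unfolding policy_def
  proof (intro allI conjI impI)
    fix s t
    assume nd: "(s, t) \<notin> diff_label_pairs lab"
    show "Q (s, t) \<in> couplings (\<tau> s) (\<tau> t)"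
    proof (cases "(s, t) \<in> diag_pairs")
      case True then show ?thesis using dcoup by (auto simp: Q_def in_diag)
    next
      case False
      show ?thesis
      proof (cases "(s, t) \<in> X")
        case True then show ?thesis using K[OF True False] by (auto simp: good_def)
      next
        case False': False
        then show ?thesis using nd False policy_coupling[OF P0, of lab s t]
          by (auto simp: Q_def diff_label_pairs_def)
      qed
    qed
  next
    fix s t
    assume d: "(s, t) \<in> diff_label_pairs lab"
    then have "(s, t) \<notin> diag_pairs" by (auto simp: diff_label_pairs_def in_diag)
    moreover have "(s, t) \<notin> X" using K[of "(s, t)"] d \<open>(s, t) \<notin> diag_pairs\<close> by (auto simp: diff_label_pairs_def)
    ultimately show "Q (s, t) = return_pmf (s, t)" using d policy_diff[OF P0, of lab s t]
      by (auto simp: Q_def diff_label_pairs_def)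
  qed
  have sub: "set_pmf (Q x) \<subseteq> X" if "x \<in> X" for x
  proof (cases "x \<in> diag_pairs")
    case True then show ?thesis using dcoup(2)[of \<tau> "fst x"] DX by (auto simp: Q_def)
  next
    case False then show ?thesis using K[OF that False] by (auto simp: good_def)
  qed
  have cr: "attrn \<tau> lab X n x \<Longrightarrow> canreach Q diag_pairs n x" for n x
  proof (induction n arbitrary: x rule: less_induct)
    case (less n)
    show ?case
    proof (cases "x \<in> diag_pairs")
      case True then show ?thesis by (cases n) auto
    next
      case False
      have xX: "x \<in> X" using attrn_diag_or[OF less.prems False] by auto
      note k = K[OF xX False]
      have le: "rk x \<le> n" unfolding rk_def using less.prems by (rule Least_le)
      obtain y where y: "y \<in> set_pmf (Q x)" "attrn \<tau> lab X (rk x - 1) y"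
        using k by (auto simp: good_def)
      have "canreach Q diag_pairs (rk x - 1) y" using less.IH[OF _ y(2)] le k by linarith
      then have "canreach Q diag_pairs (rk x) x" using y k by (metis canreach.simps(2))
      then show ?thesis using le by (rule canreach_mono)
    qed
  qed
  have cr': "\<exists>n. canreach Q diag_pairs n x" if "x \<in> X" for x
    using att[OF that] cr by blast
  have "reach_prob Q diag_pairs x = 1" if "x \<in> X" for x
    by (rule closed_reach[where W=X]) (use sub cr' that in auto)
  then show ?thesis using pol sub cr' by blast
qed



lemma reach_T: fixes Q :: "'a::finite \<Rightarrow> 'a pmf" shows "x \<in> T \<Longrightarrow> reach_prob Q T x = 1"
  by (simp add: reach_eq hit_T)

lemma reach_canreach: fixes Q :: "'a::finite \<Rightarrow> 'a pmf"
  assumes "reach_prob Q T x = 1" shows "\<exists>n. canreach Q T n x"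
proof (rule ccontr)
  assume "\<nexists>n. canreach Q T n x"
  then have "hit Q T n x \<le> 0" for n using hit_pos_canreach[of Q T n x] by force
  then have "reach_prob Q T x \<le> 0" unfolding reach_eq by (intro cSUP_least) auto
  then show False using assms by simp
qed

lemma no_canreach_loop: "x \<notin> T \<Longrightarrow> set_pmf (Q x) = {x} \<Longrightarrow> \<not> canreach Q T n x"
  by (induction n) auto

lemma attrn_mono: "attrn \<tau> lab X n x \<Longrightarrow> X \<subseteq> Y \<Longrightarrow> attrn \<tau> lab Y n x"
proof (induction n arbitrary: x)
  case 0 then show ?case by simp
next
  case (Suc n)
  then show ?case by simp blast
qed

lemma rb_attrn:
  fixes \<tau> :: "'s::finite \<Rightarrow> 's pmf" and lab :: "'s \<Rightarrow> 'l"
  assumes P: "policy \<tau> lab P"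
  shows "reach_prob P diag_pairs x = 1 \<Longrightarrow> canreach P diag_pairs n x \<Longrightarrow>
    attrn \<tau> lab {(s,t). robust_bisimilar \<tau> lab s t} n x"
proof (induction n arbitrary: x)
  case 0 then show ?case by simp
next
  case (Suc n)
  show ?case
  proof (cases "x \<in> diag_pairs")
    case True then show ?thesis by simp
  next
    case False
    obtain a b where x: "x = (a, b)" by (cases x)
    have lab: "lab a = lab b"
    proof (rule ccontr)
      assume "lab a \<noteq> lab b"
      then have "set_pmf (P x) = {x}" using policy_diff[OF P] x by simp
      then show False using no_canreach_loop[OF False, of P "Suc n"] Suc.prems by simp
    qed
    have cp: "P x \<in> couplings (\<tau> a) (\<tau> b)" using policy_coupling[OF P lab] x by simp
    have succ: "reach_prob P diag_pairs z = 1" if "z \<in> set_pmf (P x)" for z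
      using reach_succ[OF Suc.prems(1) False that] .
    have sub: "set_pmf (P x) \<subseteq> {(s,t). robust_bisimilar \<tau> lab s t}"
      using succ P by (auto simp: robust_bisimilar_def)
    obtain y where y: "y \<in> set_pmf (P x)" "canreach P diag_pairs n y" using Suc.prems(2) False by auto
    have "attrn \<tau> lab {(s,t). robust_bisimilar \<tau> lab s t} n y" using Suc.IH[OF succ[OF y(1)] y(2)] .
    moreover have "robust_bisimilar \<tau> lab a b" using P Suc.prems(1) x by (auto simp: robust_bisimilar_def)
    ultimately show ?thesis using x lab cp sub y by auto
  qed
qed

lemma hit_swap:
  fixes Q :: "('s::finite \<times> 's) \<Rightarrow> ('s \<times> 's) pmf"
  assumes Q': "\<And>x. Q' x = map_pmf prod.swap (Q (prod.swap x))"
    and T: "\<And>x. prod.swap x \<in> T \<longleftrightarrow> x \<in> T"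
  shows "hit Q' T n (prod.swap x) = hit Q T n x"
proof (induction n arbitrary: x)
  case 0 then show ?case using T by simp
next
  case (Suc n)
  have "(\<Sum>y\<in>UNIV. pmf (Q' (prod.swap x)) y * hit Q' T n y)
      = (\<Sum>z\<in>UNIV. pmf (Q' (prod.swap x)) (prod.swap z) * hit Q' T n (prod.swap z))"
    by (rule sum.reindex_bij_witness[of _ prod.swap prod.swap]) auto
  also have "\<dots> = (\<Sum>z\<in>UNIV. pmf (Q x) z * hit Q T n z)"
    by (simp add: Q' Suc pmf_map_inj')
  finally show ?case using T[of x] by simp
qed

lemma path_from_canreach:
  "canreach Q T n x \<Longrightarrow> x \<in> W \<Longrightarrow> (\<forall>y\<in>W. set_pmf (Q y) \<subseteq> W) \<Longrightarrow>
    \<exists>xs. is_path Q xs \<and> hd xs = x \<and> last xs \<in> T \<and> set xs \<subseteq> W"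
proof (induction n arbitrary: x)
  case 0
  then show ?case by (intro exI[of _ "[x]"]) (auto simp: is_path_def)
next
  case (Suc n)
  show ?case
  proof (cases "x \<in> T")
    case True then show ?thesis using Suc.prems by (intro exI[of _ "[x]"]) (auto simp: is_path_def)
  next
    case False
    then obtain y where y: "y \<in> set_pmf (Q x)" "canreach Q T n y" using Suc.prems by auto
    have "y \<in> W" using y Suc.prems by auto
    then obtain ys where ys: "is_path Q ys" "hd ys = y" "last ys \<in> T" "set ys \<subseteq> W"
      using Suc.IH[OF y(2)] Suc.prems by blast
    have ne: "ys \<noteq> []" using ys by (auto simp: is_path_def)
    have "is_path Q (x # ys)"
      unfolding is_path_def
    proof (intro conjI allI impI)
      fix i assume i: "Suc i < length (x # ys)"
      show "(x # ys) ! Suc i \<in> set_pmf (Q ((x # ys) ! i))"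
      proof (cases i)
        case 0 then show ?thesis using ne ys(2) y(1) by (simp add: hd_conv_nth)
      next
        case (Suc j) then show ?thesis using ys(1) i by (simp add: is_path_def)
      qed
    qed simp
    then show ?thesis using ys ne Suc.prems by (intro exI[of _ "x # ys"]) auto
  qed
qed

theorem proposition3:
  fixes \<tau> :: "'s::finite \<Rightarrow> 's pmf" and lab :: "'s \<Rightarrow> 'l::finite"
  assumes "card (range lab) \<ge> 2"
  shows "robust_bisimulation \<tau> lab {(s,t). robust_bisimilar \<tau> lab s t}"
proof -
  let ?rb = "robust_bisimilar \<tau> lab"
  define R where "R = {(s,t). ?rb s t}"
  have refl: "?rb s s" for s
    unfolding robust_bisimilar_def
    by (intro exI[of _ "P0 \<tau> lab"] conjI P0 reach_T) (simp add: diag_pairs_def)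
  have DR: "diag_pairs \<subseteq> R" using refl by (auto simp: R_def diag_pairs_def)
  have attR: "\<exists>n. attrn \<tau> lab R n x" if xR: "x \<in> R" for x
  proof -
    obtain s t where x: "x = (s, t)" by (cases x)
    obtain P where P: "policy \<tau> lab P" "reach_prob P diag_pairs (s, t) = 1"
      using xR x by (auto simp: R_def robust_bisimilar_def)
    obtain n where "canreach P diag_pairs n (s, t)" using reach_canreach[OF P(2)] by auto
    then show ?thesis using rb_attrn[OF P(1) P(2)] x unfolding R_def by blast
  qed
  obtain QR where QR: "policy \<tau> lab QR"
    "\<And>x. x \<in> R \<Longrightarrow> set_pmf (QR x) \<subseteq> R \<and> (\<exists>n. canreach QR diag_pairs n x)"
    using attr_policy[OF DR attR] by blast
  have bis: "lab s = lab t \<and> QR (s, t) \<in> couplings (\<tau> s) (\<tau> t) \<and> set_pmf (QR (s, t)) \<subseteq> R"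
    if stR: "(s, t) \<in> R" for s t
  proof -
    obtain n where n: "attrn \<tau> lab R n (s, t)" using attR[OF stR] by auto
    have "lab s = lab t"
    proof (cases "(s, t) \<in> diag_pairs")
      case True then show ?thesis by (simp add: diag_pairs_def)
    next
      case False then show ?thesis using attrn_diag_or[OF n] by simp
    qed
    then show ?thesis using policy_coupling[OF QR(1)] QR(2)[OF stR] by auto
  qed
  have sym: "?rb t s" if st0: "?rb s t" for s t
  proof -
    obtain P where P: "policy \<tau> lab P" "reach_prob P diag_pairs (s, t) = 1"
      using st0 by (auto simp: robust_bisimilar_def)
    define P' where "P' x = map_pmf prod.swap (P (prod.swap x))" for x
    have pol: "policy \<tau> lab P'"
      using P(1) unfolding policy_def P'_def
      by (auto simp: diff_label_pairs_def couplings_def pmf.map_comp o_def)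
    have "reach_prob P' diag_pairs (t, s) = reach_prob P diag_pairs (s, t)"
    proof -
      have T: "prod.swap x \<in> diag_pairs \<longleftrightarrow> x \<in> diag_pairs" for x :: "'s \<times> 's"
        by (cases x) (auto simp: diag_pairs_def)
      have "hit P' diag_pairs n (t, s) = hit P diag_pairs n (s, t)" for n
        using hit_swap[of P' P diag_pairs n "(s, t)", OF P'_def T] by simp
      then show ?thesis unfolding reach_eq by simp
    qed
    then show ?thesis using pol P(2) by (auto simp: robust_bisimilar_def)
  qed
  have trans: "?rb s u" if st: "?rb s t" and tu: "?rb t u" for s t u
  proof -
    define W where "W = R O R"
    have RW: "R \<subseteq> W" unfolding W_def using refl by (auto simp: R_def)
    have DW: "diag_pairs \<subseteq> W" using DR RW by auto
    have claim: "attrn \<tau> lab R n (a, b) \<Longrightarrow> (b, c) \<in> R \<Longrightarrow> \<exists>m. attrn \<tau> lab W m (a, c)" for n a b c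
    proof (induction n arbitrary: a b c)
      case 0
      then have "(a, c) \<in> R" by (simp add: diag_pairs_def)
      then show ?case using attR attrn_mono RW by blast
    next
      case (Suc n)
      show ?case
      proof (cases "a = b")
        case True
        then have "(a, c) \<in> R" using Suc.prems by simp
        then show ?thesis using attR attrn_mono RW by blast
      next
        case False
        then have nd: "(a, b) \<notin> diag_pairs" by (simp add: diag_pairs_def)
        obtain \<omega>1 y where w1: "\<omega>1 \<in> couplings (\<tau> a) (\<tau> b)" "set_pmf \<omega>1 \<subseteq> R"
          "y \<in> set_pmf \<omega>1" "attrn \<tau> lab R n y" and abR: "(a, b) \<in> R" and lab1: "lab a = lab b"
          using Suc.prems(1) nd by auto
        obtain a1 b1 where y: "y = (a1, b1)" by (cases y)
        have b2: "lab b = lab c" "QR (b, c) \<in> couplings (\<tau> b) (\<tau> c)" "set_pmf (QR (b, c)) \<subseteq> R"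
          using bis[OF Suc.prems(2)] by auto
        have e1: "\<tau> b = map_pmf snd \<omega>1" using w1(1) by (simp add: couplings_def)
        have e2: "\<tau> b = map_pmf fst (QR (b, c))" using b2(2) by (simp add: couplings_def)
        have "b1 \<in> snd ` set_pmf \<omega>1" using w1(3) y by force
        then have "b1 \<in> fst ` set_pmf (QR (b, c))" using e1 e2 by (metis set_map_pmf)
        then obtain c1 where c1: "(b1, c1) \<in> set_pmf (QR (b, c))" by force
        obtain m where m: "attrn \<tau> lab W m (a1, c1)"
          using Suc.IH[of a1 b1 c1] w1(4) y c1 b2(3) by auto
        obtain \<omega> where w: "\<omega> \<in> couplings (\<tau> a) (\<tau> c)" "set_pmf \<omega> = set_pmf \<omega>1 O set_pmf (QR (b, c))"
          using glue[OF w1(1) b2(2)] by blast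
        have "set_pmf \<omega> \<subseteq> W" using w(2) w1(2) b2(3) unfolding W_def by auto
        moreover have "(a1, c1) \<in> set_pmf \<omega>" using w(2) w1(3) y c1 by auto
        moreover have "(a, c) \<in> W" using abR Suc.prems(2) unfolding W_def by auto
        ultimately have "attrn \<tau> lab W (Suc m) (a, c)" using w(1) lab1 b2(1) m by auto
        then show ?thesis by blast
      qed
    qed
    have attW: "\<exists>m. attrn \<tau> lab W m x" if xW: "x \<in> W" for x
    proof -
      obtain a b c where x: "x = (a, c)" "(a, b) \<in> R" "(b, c) \<in> R" using xW unfolding W_def by auto
      obtain n where "attrn \<tau> lab R n (a, b)" using attR[OF x(2)] by auto
      then show ?thesis using claim x by blast
    qed
    obtain Q where Q: "policy \<tau> lab Q" "\<forall>x\<in>W. reach_prob Q diag_pairs x = 1"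
      using attr_policy[OF DW attW] by blast
    have "(s, u) \<in> W" using st tu unfolding W_def R_def by auto
    then show ?thesis using Q by (auto simp: robust_bisimilar_def)
  qed
  have eq: "equiv UNIV R"
    unfolding equiv_def refl_on_def sym_def trans_def R_def
    using refl sym trans by blast
  have "bisimulation \<tau> lab R"
    unfolding bisimulation_def using eq bis by blast
  moreover have "\<exists>P. policy \<tau> lab P \<and>
        (\<exists>xs. is_path P xs \<and> hd xs = (s,t) \<and> last xs \<in> diag_pairs \<and> supports P R xs)"
    if stR: "(s, t) \<in> R" for s t
  proof -
    obtain n where "canreach QR diag_pairs n (s, t)" using QR(2)[OF stR] by auto
    then obtain xs where "is_path QR xs" "hd xs = (s, t)" "last xs \<in> diag_pairs" "set xs \<subseteq> R"
      using path_from_canreach[of QR diag_pairs n "(s, t)" R] stR QR(2) by blast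
    then show ?thesis using QR by (intro exI[of _ QR] conjI exI[of _ xs]) (auto simp: supports_def)
  qed
  ultimately show ?thesis unfolding robust_bisimulation_def R_def by blast
qed


end
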